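(* Let $G=(U,V,E)$ be a bipartite graph with $|U|=|V|=N$ in which every vertex of $U$ has at least one neighbor, and run the matching algorithm on $G$. Let $i\ge 0$ with $|M(i)|<N$, let $l\ge 0$ be an integer, and let $u_0\in U$ be free with respect to $M(i)$ with $n_{u_0}\subseteq D_l(i)$. Then every augmenting path in $G$ with respect to $M(i)$ starting at $u_0$ has length at least $2l+1$.
   Context: Matching algorithm. For $u\in U$ let $n_u=\{v\in V:(u,v)\in E\}$. The algorithm maintains a matching $M\subseteq E$ (initially empty) and an integer value $h_v$ for each $v\in V$ (initially $0$). A vertex is free if no edge of $M$ is incident to it. One iteration: choose any free $u\in U$ (arbitrary choice); choose $j\in\arg\min_{v\in n_u}h_v$ (ties broken arbitrarily); if some $u_{\rm old}\in U$ has $(u_{\rm old},j)\in M$, remove $(u_{\rm old},j)$ from $M$ (so $u_{\rm old}$ becomes free); add $(u,j)$ to $M$; increase $h_j$ by $1$. Iterations are repeated while $|M|<N$ and the algorithm terminates when $|M|=N$. $M(i)$ and $h_v(i)$ denote the matching and the values after the $i$-th iteration. For an integer $l$, $D_l(i)=\{v\in V: h_v(i)\ge l\}$. With respect to a matching $M$, an alternating path is a simple path in $G$ whose edges alternate between edges not in $M$ and edges in $M$; an augmenting path is an alternating path whose two endpoints are free vertices (one in $U$, one in $V$). The length of a path is its number of edges. *)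

theory Defs
  imports Main
begin

(* Bipartite graph G = (U,V,E): vertices of U have type 'u, of V type 'v,
   E :: ('u * 'v) set with E \<subseteq> U \<times> V.  A matching is a set of edges. *)

definition nbr :: "('u \<times> 'v) set \<Rightarrow> 'u \<Rightarrow> 'v set" where
  "nbr E u = {v. (u, v) \<in> E}"

definition free_U :: "('u \<times> 'v) set \<Rightarrow> 'u \<Rightarrow> bool" where
  "free_U M u = (\<forall>v. (u, v) \<notin> M)"

definition free_V :: "('u \<times> 'v) set \<Rightarrow> 'v \<Rightarrow> bool" where
  "free_V M v = (\<forall>u. (u, v) \<notin> M)"

type_synonym ('u, 'v) alg_state = "('u \<times> 'v) set \<times> ('v \<Rightarrow> int)"

(* one iteration, with arbitrary choice of the free u and of the argmin j *)
definition alg_step :: "'u set \<Rightarrow> ('u \<times> 'v) set \<Rightarrow> ('u, 'v) alg_state \<Rightarrow> ('u, 'v) alg_state \<Rightarrow> bool" where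
  "alg_step U E s s' =
     (\<exists>u\<in>U. free_U (fst s) u \<and>
        (\<exists>j\<in>nbr E u. (\<forall>v\<in>nbr E u. snd s j \<le> snd s v) \<and>
           fst s' = (fst s - {(uold, j) | uold. uold \<in> U}) \<union> {(u, j)} \<and>
           snd s' = (snd s)(j := snd s j + 1)))"

(* s k = (M(k), h(k)); the algorithm has performed i iterations, each performed
   while |M| < N *)
definition alg_run :: "'u set \<Rightarrow> ('u \<times> 'v) set \<Rightarrow> nat \<Rightarrow> (nat \<Rightarrow> ('u, 'v) alg_state) \<Rightarrow> nat \<Rightarrow> bool" where
  "alg_run U E N s i =
     (s 0 = ({}, (\<lambda>_. 0)) \<and>
      (\<forall>k<i. card (fst (s k)) < N \<and> alg_step U E (s k) (s (Suc k))))"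

definition D :: "'v set \<Rightarrow> int \<Rightarrow> ('v \<Rightarrow> int) \<Rightarrow> 'v set" where
  "D V l h = {v \<in> V. h v \<ge> l}"

(* paths: lists of vertices of G, U-vertices tagged Inl, V-vertices tagged Inr *)
fun rel_edge :: "('u \<times> 'v) set \<Rightarrow> 'u + 'v \<Rightarrow> 'u + 'v \<Rightarrow> bool" where
  "rel_edge R (Inl u) (Inr v) = ((u, v) \<in> R)"
| "rel_edge R (Inr v) (Inl u) = ((u, v) \<in> R)"
| "rel_edge R _ _ = False"

definition is_path :: "('u \<times> 'v) set \<Rightarrow> ('u + 'v) list \<Rightarrow> bool" where
  "is_path E p = (p \<noteq> [] \<and> distinct p \<and>
     (\<forall>k. Suc k < length p \<longrightarrow> rel_edge E (p ! k) (p ! Suc k)))"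

definition alternating_path :: "('u \<times> 'v) set \<Rightarrow> ('u \<times> 'v) set \<Rightarrow> ('u + 'v) list \<Rightarrow> bool" where
  "alternating_path E M p = (is_path E p \<and>
     (\<forall>k. Suc (Suc k) < length p \<longrightarrow>
        (rel_edge M (p ! k) (p ! Suc k) \<longleftrightarrow> \<not> rel_edge M (p ! Suc k) (p ! Suc (Suc k)))))"

fun free_vertex :: "('u \<times> 'v) set \<Rightarrow> 'u + 'v \<Rightarrow> bool" where
  "free_vertex M (Inl u) = free_U M u"
| "free_vertex M (Inr v) = free_V M v"

definition augmenting_path :: "('u \<times> 'v) set \<Rightarrow> ('u \<times> 'v) set \<Rightarrow> ('u + 'v) list \<Rightarrow> bool" where
  "augmenting_path E M p = (alternating_path E M p \<and>
     free_vertex M (hd p) \<and> free_vertex M (last p) \<and>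
     isl (hd p) \<noteq> isl (last p))"

(* length = number of edges *)
definition path_length :: "('u + 'v) list \<Rightarrow> nat" where
  "path_length p = length p - 1"

end

theory Submission
  imports Defs
begin

definition inv_state :: "'u set \<Rightarrow> ('u \<times> 'v) set \<Rightarrow> ('u, 'v) alg_state \<Rightarrow> bool" where
  "inv_state U E st = ((\<forall>u w v. (u,w) \<in> fst st \<longrightarrow> (u,v) \<in> E \<longrightarrow> snd st w \<le> snd st v + 1)
     \<and> (\<forall>u w. (u,w) \<in> fst st \<longrightarrow> u \<in> U)
     \<and> (\<forall>v. free_V (fst st) v \<longrightarrow> snd st v = 0))"

lemma inv_step:
  assumes "inv_state U E st" "alg_step U E st st'"
  shows "inv_state U E st'"
proof -
  obtain M h where st: "st = (M,h)" by (cases st)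
  obtain M' h' where st': "st' = (M',h')" by (cases st')
  from assms(2) obtain u j where u: "u \<in> U" "free_U M u" and j: "j \<in> nbr E u"
    "\<forall>v\<in>nbr E u. h j \<le> h v" and M': "M' = (M - {(uold, j) | uold. uold \<in> U}) \<union> {(u, j)}"
    and h': "h' = h(j := h j + 1)"
    unfolding alg_step_def st st' by auto
  have I1: "\<forall>u w v. (u,w) \<in> M \<longrightarrow> (u,v) \<in> E \<longrightarrow> h w \<le> h v + 1"
   and I2: "\<forall>u w. (u,w) \<in> M \<longrightarrow> u \<in> U"
   and I3: "\<forall>v. free_V M v \<longrightarrow> h v = 0" using assms(1) unfolding inv_state_def st by auto
  have hmono: "h v \<le> h' v" for v using h' by auto
  have A: "h' w \<le> h' v + 1" if "(u',w) \<in> M'" "(u',v) \<in> E" for u' w v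
  proof (cases "(u',w) = (u,j)")
    case True
    then have "v \<in> nbr E u" using that nbr_def by fastforce
    then have "h j \<le> h v" using j by auto
    then show ?thesis using True h' hmono[of v] by auto
  next
    case False
    then have "(u',w) \<in> M" "w \<noteq> j" using that(1) M' I2 by auto
    then have "h w \<le> h v + 1" using I1 that(2) by auto
    then show ?thesis using \<open>w \<noteq> j\<close> h' hmono[of v] by auto
  qed
  have B: "\<forall>u w. (u,w) \<in> M' \<longrightarrow> u \<in> U" using M' I2 u by auto
  have C: "h' v = 0" if "free_V M' v" for v
  proof -
    have "v \<noteq> j" using that M' unfolding free_V_def by auto
    moreover have "free_V M v" using that M' \<open>v \<noteq> j\<close> unfolding free_V_def by auto
    ultimately show ?thesis using I3 h' by auto
  qed
  show ?thesis unfolding inv_state_def st' using A B C by auto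
qed

lemma inv_run:
  assumes "alg_run U E N s i"
  shows "k \<le> i \<Longrightarrow> inv_state U E (s k)"
proof (induction k)
  case 0
  then show ?case using assms unfolding alg_run_def inv_state_def free_V_def by auto
next
  case (Suc k)
  then have "alg_step U E (s k) (s (Suc k))" using assms unfolding alg_run_def by auto
  then show ?case using inv_step[of U E "s k" "s (Suc k)"] Suc by auto
qed

lemma shape:
  assumes "is_path E p" "hd p = Inl u0"
  shows "k < length p \<Longrightarrow> isl (p!k) = even k"
proof (induction k)
  case 0
  then show ?case using assms by (cases p) auto
next
  case (Suc k)
  then have r: "rel_edge E (p!k) (p!Suc k)" using assms unfolding is_path_def by auto
  have "isl (p!k) = even k" using Suc by auto
  then show ?case using r by (cases "p!k"; cases "p!Suc k") auto
qed

lemma altern: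
  assumes "alternating_path E M p" "hd p = Inl u0" "free_U M u0"
  shows "Suc k < length p \<Longrightarrow> rel_edge M (p!k) (p!Suc k) = odd k"
proof (induction k)
  case 0
  have "p!0 = Inl u0" using assms(2) 0 by (cases p) auto
  then show ?case using assms(3) unfolding free_U_def by (cases "p!Suc 0") auto
next
  case (Suc k)
  then show ?case using assms(1) unfolding alternating_path_def by auto
qed

theorem mainTheorem7:
  fixes U :: "'u set" and V :: "'v set" and E :: "('u \<times> 'v) set"
    and N :: nat and s :: "nat \<Rightarrow> ('u, 'v) alg_state" and i :: nat
    and l :: int and u0 :: 'u and p :: "('u + 'v) list"
  assumes "finite U" "finite V" "card U = N" "card V = N"
    and "E \<subseteq> U \<times> V"
    and "\<forall>u\<in>U. nbr E u \<noteq> {}"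
    and "alg_run U E N s i"
    and "card (fst (s i)) < N"
    and "l \<ge> 0"
    and "u0 \<in> U" "free_U (fst (s i)) u0"
    and "nbr E u0 \<subseteq> D V l (snd (s i))"
    and "augmenting_path E (fst (s i)) p" "hd p = Inl u0"
  shows "int (path_length p) \<ge> 2 * l + 1"
proof -
  define M where "M = fst (s i)"
  define h where "h = snd (s i)"
  have inv: "inv_state U E (M,h)" using inv_run[OF assms(7), of i] M_def h_def by simp
  have I1: "\<forall>u w v. (u,w) \<in> M \<longrightarrow> (u,v) \<in> E \<longrightarrow> h w \<le> h v + 1"
   and I3: "\<forall>v. free_V M v \<longrightarrow> h v = 0" using inv unfolding inv_state_def by auto
  have alt: "alternating_path E M p" and ip: "is_path E p"
    using assms(13) M_def unfolding augmenting_path_def alternating_path_def by auto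
  have fr: "free_U M u0" using assms(11) M_def by simp
  have pne: "p \<noteq> []" using ip unfolding is_path_def by auto
  note sh = shape[OF ip assms(14)]
  note al = altern[OF alt assms(14) fr]
  have Ep: "Suc k < length p \<Longrightarrow> rel_edge E (p!k) (p!Suc k)" for k
    using ip unfolding is_path_def by auto
  have main: "2*j+1 < length p \<Longrightarrow> (\<exists>v. p!(2*j+1) = Inr v \<and> h v \<ge> l - int j)" for j
  proof (induction j)
    case 0
    have p0: "p!0 = Inl u0" using assms(14) pne by (cases p) auto
    have "\<not> isl (p!1)" using sh[of 1] 0 by auto
    then obtain v where v: "p!1 = Inr v" by (cases "p!1") auto
    have "(u0,v) \<in> E" using Ep[of 0] 0 p0 v by auto
    then have "v \<in> nbr E u0" unfolding nbr_def by auto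
    then have "h v \<ge> l" using assms(12) h_def unfolding D_def by auto
    then show ?case using v by auto
  next
    case (Suc j)
    then obtain v where v: "p!(2*j+1) = Inr v" "h v \<ge> l - int j" by auto
    have "isl (p!(2*j+2))" using sh[of "2*j+2"] Suc.prems by auto
    then obtain u where u: "p!(2*j+2) = Inl u" by (cases "p!(2*j+2)") auto
    have "\<not> isl (p!(2*j+3))" using sh[of "2*j+3"] Suc.prems by auto
    then obtain w where w: "p!(2*j+3) = Inr w" by (cases "p!(2*j+3)") auto
    have "rel_edge M (p!(2*j+1)) (p!Suc (2*j+1))" using al[of "2*j+1"] Suc.prems by auto
    then have uv: "(u,v) \<in> M" using u v by (simp add: numeral_eq_Suc)
    have "rel_edge E (p!(2*j+2)) (p!Suc (2*j+2))" using Ep[of "2*j+2"] Suc.prems by auto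
    then have uw: "(u,w) \<in> E" using u w by (simp add: numeral_eq_Suc)
    have "h v \<le> h w + 1" using I1 uv uw by auto
    then have "h w \<ge> l - int (Suc j)" using v by auto
    moreover have "2 * Suc j + 1 = 2*j+3" by simp
    ultimately show ?case using w by metis
  qed
  have lastp: "last p = p!(length p - 1)" using pne by (simp add: last_conv_nth)
  have hdi: "isl (hd p)" using assms(14) by simp
  have "isl (last p) \<noteq> isl (hd p)" and flast: "free_vertex M (last p)"
    using assms(13) M_def unfolding augmenting_path_def by auto
  then have nl: "\<not> isl (last p)" using hdi by auto
  then have "odd (length p - 1)" using sh[of "length p - 1"] lastp pne by auto
  then obtain j where j: "length p - 1 = 2*j+1" by (metis oddE)
  then obtain v where v: "p!(2*j+1) = Inr v" "h v \<ge> l - int j" proof -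
    have "2*j+1 < length p" using j pne by (cases p) auto
    then show ?thesis using main[of j] that by auto
  qed
  have "free_V M v" using flast lastp j v by auto
  then have "h v = 0" using I3 by auto
  then show ?thesis using v j unfolding path_length_def by auto
qed

end
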